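(* For any field $K$ there is a Bruhat decomposition $$G_{m\wr d}=\bigsqcup_{w\in\Sigma_m\wr\Sigma_d}B_m^d\,w\,B_m^d$$ (disjoint union).
   Context: $\Sigma_m\wr\Sigma_d=\Sigma_m^d\rtimes\Sigma_d$ with multiplication $w(g_1,\dots,g_d)=(g_{w^{-1}(1)},\dots,g_{w^{-1}(d)})w$, regarded as a subgroup of $\Sigma_{md}$ via $(w_i)_i\sigma:(j-1)m+a\mapsto(\sigma(j)-1)m+w_{\sigma(j)}(a)$. Over $K$: $B_m\subseteq\mathrm{GL}_m(K)$ upper triangular matrices; $N_{m\wr d}\subseteq\mathrm{GL}_{md}(K)$ monomial matrices whose underlying permutation lies in $\Sigma_m\wr\Sigma_d$; $B_m^d$ block diagonal matrices $\mathrm{diag}(b_1,\dots,b_d)$, $b_i\in B_m$; $G_{m\wr d}=\langle B_m^d,N_{m\wr d}\rangle$. An element $w\in\Sigma_m\wr\Sigma_d$ stands for any monomial matrix in $N_{m\wr d}$ with underlying permutation $w$ (the double coset $B_m^dwB_m^d$ is independent of the choice). *)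

theory Defs
  imports "Jordan_Normal_Form.Matrix" "HOL-Combinatorics.Permutations"
begin

text \<open>Indices are 0-based: position j*m + a (j < d, a < m) corresponds to the
paper's (j+1-1)m + (a+1).\<close>

definition wreath_perm :: "nat \<Rightarrow> nat \<Rightarrow> (nat \<Rightarrow> nat \<Rightarrow> nat) \<Rightarrow> (nat \<Rightarrow> nat) \<Rightarrow> nat \<Rightarrow> nat" where
  "wreath_perm m d ws \<sigma> x =
     (if x < m * d then \<sigma> (x div m) * m + ws (\<sigma> (x div m)) (x mod m) else x)"

definition wreath :: "nat \<Rightarrow> nat \<Rightarrow> (nat \<Rightarrow> nat) set" where
  "wreath m d = {wreath_perm m d ws \<sigma> | ws \<sigma>.
      \<sigma> permutes {..<d} \<and> (\<forall>i<d. ws i permutes {..<m})}"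

definition monomial_mat :: "nat \<Rightarrow> (nat \<Rightarrow> nat) \<Rightarrow> 'a::field mat \<Rightarrow> bool" where
  "monomial_mat n p M \<longleftrightarrow> M \<in> carrier_mat n n \<and>
     (\<forall>i<n. \<forall>j<n. M $$ (i, j) \<noteq> 0 \<longleftrightarrow> i = p j)"

definition N_wr :: "nat \<Rightarrow> nat \<Rightarrow> 'a::field mat set" where
  "N_wr m d = {M. \<exists>w \<in> wreath m d. monomial_mat (m * d) w M}"

definition B_blocks :: "nat \<Rightarrow> nat \<Rightarrow> 'a::field mat set" where
  "B_blocks m d = {M. M \<in> carrier_mat (m * d) (m * d) \<and> invertible_mat M \<and>
     (\<forall>i<m*d. \<forall>j<m*d. M $$ (i, j) \<noteq> 0 \<longrightarrow> i div m = j div m \<and> i \<le> j)}"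

inductive_set gen_group :: "nat \<Rightarrow> 'a::field mat set \<Rightarrow> 'a mat set"
  for n :: nat and S :: "'a mat set" where
  one: "1\<^sub>m n \<in> gen_group n S"
| gen: "A \<in> S \<Longrightarrow> A \<in> gen_group n S"
| mult: "A \<in> gen_group n S \<Longrightarrow> B \<in> gen_group n S \<Longrightarrow> A * B \<in> gen_group n S"
| inv: "A \<in> gen_group n S \<Longrightarrow> B \<in> carrier_mat n n \<Longrightarrow> A * B = 1\<^sub>m n \<Longrightarrow> B * A = 1\<^sub>m n
        \<Longrightarrow> B \<in> gen_group n S"

definition G_wr :: "nat \<Rightarrow> nat \<Rightarrow> 'a::field mat set" where
  "G_wr m d = gen_group (m * d) (B_blocks m d \<union> N_wr m d)"

text \<open>Double coset B_m^d w B_m^d (union over all monomial representatives of w,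
which is the same set since the double coset does not depend on the choice).\<close>
definition double_coset :: "nat \<Rightarrow> nat \<Rightarrow> (nat \<Rightarrow> nat) \<Rightarrow> 'a::field mat set" where
  "double_coset m d w = {b1 * M * b2 | b1 M b2.
      b1 \<in> B_blocks m d \<and> b2 \<in> B_blocks m d \<and> monomial_mat (m * d) w M}"

end

theory Submission
  imports Defs "Jordan_Normal_Form.Determinant"
begin

lemma mult_entry:
  assumes "A \<in> carrier_mat n n" "B \<in> carrier_mat n n" "i < n" "j < n"
  shows "(A * B) $$ (i, j) = (\<Sum>k<n. A $$ (i, k) * B $$ (k, j))"
  using assms by (auto simp: scalar_prod_def lessThan_atLeast0 intro!: sum.cong)

lemma sum_single:
  assumes "finite A" "a \<in> A" "\<And>x. x \<in> A \<Longrightarrow> x \<noteq> a \<Longrightarrow> f x = 0"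
  shows "sum f A = f a"
proof -
  have "sum f A = f a + sum f (A - {a})" using assms by (simp add: sum.remove)
  also have "sum f (A - {a}) = 0" using assms by (intro sum.neutral) auto
  finally show ?thesis by simp
qed

lemma inv_char:
  assumes A: "(A :: 'a::field mat) \<in> carrier_mat n n"
  shows "invertible_mat A \<longleftrightarrow> (\<exists>B\<in>carrier_mat n n. A * B = 1\<^sub>m n)"
proof
  assume "invertible_mat A"
  then obtain B where AB: "A * B = 1\<^sub>m n" and BA: "B * A = 1\<^sub>m (dim_row B)"
    using A unfolding invertible_mat_def inverts_mat_def by auto
  have "dim_row B = n" using BA A
    by (metis carrier_matD(2) index_mult_mat(3) index_one_mat(3))
  moreover have "dim_col B = n" using AB
    by (metis index_mult_mat(3) index_one_mat(3))
  ultimately show "\<exists>B\<in>carrier_mat n n. A * B = 1\<^sub>m n" using AB by blast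
next
  assume "\<exists>B\<in>carrier_mat n n. A * B = 1\<^sub>m n"
  then obtain B where B: "B \<in> carrier_mat n n" and AB: "A * B = 1\<^sub>m n" by blast
  have BA: "B * A = 1\<^sub>m n" using mat_mult_left_right_inverse[OF A B AB] .
  show "invertible_mat A" unfolding invertible_mat_def inverts_mat_def
    using A B AB BA by (auto intro!: exI[of _ B])
qed

lemma invertible_mult:
  assumes A: "(A :: 'a::field mat) \<in> carrier_mat n n" and B: "B \<in> carrier_mat n n"
    and iA: "invertible_mat A" and iB: "invertible_mat B"
  shows "invertible_mat (A * B)"
proof -
  obtain A' where A': "A' \<in> carrier_mat n n" "A * A' = 1\<^sub>m n" using iA inv_char[OF A] by blast
  obtain B' where B': "B' \<in> carrier_mat n n" "B * B' = 1\<^sub>m n" using iB inv_char[OF B] by blast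
  have "(A * B) * (B' * A') = A * (B * (B' * A'))"
    using A B A' B' by (simp add: assoc_mult_mat[of _ n n _ n _ n])
  also have "B * (B' * A') = (B * B') * A'"
    using assoc_mult_mat[OF B B'(1) A'(1)] by simp
  also have "A * ((B * B') * A') = 1\<^sub>m n" using A A' B' by simp
  finally have eq: "(A * B) * (B' * A') = 1\<^sub>m n" .
  have "B' * A' \<in> carrier_mat n n" using A' B' by simp
  then show ?thesis using eq inv_char[OF mult_carrier_mat[OF A B]] by blast
qed

definition rowop :: "nat \<Rightarrow> nat \<Rightarrow> (nat \<Rightarrow> 'a) \<Rightarrow> 'a::field mat" where
  "rowop n q a = mat n n (\<lambda>(i,l). (if i = l then 1 else 0) + (if l = q then a i else 0))"

definition colop :: "nat \<Rightarrow> nat \<Rightarrow> (nat \<Rightarrow> 'a) \<Rightarrow> 'a::field mat" where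
  "colop n q b = mat n n (\<lambda>(i,l). (if i = l then 1 else 0) + (if i = q then b l else 0))"

lemma rowop_carrier[simp]: "rowop n q a \<in> carrier_mat n n" by (simp add: rowop_def)
lemma colop_carrier[simp]: "colop n q a \<in> carrier_mat n n" by (simp add: colop_def)

lemma rowop_index: "i < n \<Longrightarrow> l < n \<Longrightarrow> rowop n q a $$ (i,l) = (if i = l then 1 else 0) + (if l = q then a i else 0)"
  by (simp add: rowop_def)
lemma colop_index: "i < n \<Longrightarrow> l < n \<Longrightarrow> colop n q a $$ (i,l) = (if i = l then 1 else 0) + (if i = q then a l else 0)"
  by (simp add: colop_def)

lemma rowop_mult:
  assumes C: "C \<in> carrier_mat n n" and q: "q < n" and ij: "i < n" "j < n"
  shows "(rowop n q a * C) $$ (i,j) = C $$ (i,j) + a i * C $$ (q,j)"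
proof -
  have "(rowop n q a * C) $$ (i,j) = (\<Sum>l<n. ((if i = l then 1 else 0) + (if l = q then a i else 0)) * C $$ (l, j))"
    using mult_entry[OF rowop_carrier C ij] ij by (simp add: rowop_index)
  also have "\<dots> = (\<Sum>l<n. (if l = i then C $$ (i,j) else 0) + (if l = q then a i * C $$ (q,j) else 0))"
    by (intro sum.cong) (auto simp: algebra_simps)
  also have "\<dots> = (\<Sum>l<n. (if l = i then C $$ (i,j) else 0)) + (\<Sum>l<n. (if l = q then a i * C $$ (q,j) else 0))"
    by (simp add: sum.distrib)
  also have "\<dots> = C $$ (i,j) + a i * C $$ (q,j)" using ij q by (simp add: sum.delta)
  finally show ?thesis .
qed

lemma colop_mult:
  assumes C: "C \<in> carrier_mat n n" and q: "q < n" and ij: "i < n" "j < n"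
  shows "(C * colop n q b) $$ (i,j) = C $$ (i,j) + C $$ (i,q) * b j"
proof -
  have "(C * colop n q b) $$ (i,j) = (\<Sum>l<n. C $$ (i, l) * ((if l = j then 1 else 0) + (if l = q then b j else 0)))"
    using mult_entry[OF C colop_carrier ij] ij by (simp add: colop_index)
  also have "\<dots> = (\<Sum>l<n. (if l = j then C $$ (i,j) else 0) + (if l = q then C $$ (i,q) * b j else 0))"
    by (intro sum.cong) (auto simp: algebra_simps)
  also have "\<dots> = (\<Sum>l<n. (if l = j then C $$ (i,j) else 0)) + (\<Sum>l<n. (if l = q then C $$ (i,q) * b j else 0))"
    by (simp add: sum.distrib)
  also have "\<dots> = C $$ (i,j) + C $$ (i,q) * b j" using ij q by (simp add: sum.delta)
  finally show ?thesis .
qed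

lemma mult_nonzero:
  assumes "A \<in> carrier_mat n n" "B \<in> carrier_mat n n" "i < n" "j < n"
    and "(A * B) $$ (i, j) \<noteq> 0"
  shows "\<exists>k<n. A $$ (i, k) \<noteq> 0 \<and> B $$ (k, j) \<noteq> 0"
proof -
  have "(\<Sum>k<n. A $$ (i, k) * B $$ (k, j)) \<noteq> 0" using assms(5) mult_entry[OF assms(1-4)] by simp
  then obtain k where "k < n" "A $$ (i, k) * B $$ (k, j) \<noteq> 0"
    by (meson lessThan_iff sum.not_neutral_contains_not_neutral)
  then show ?thesis by auto
qed

definition pat :: "nat \<Rightarrow> nat \<Rightarrow> (nat \<Rightarrow> nat) \<Rightarrow> 'a::field mat \<Rightarrow> bool" where
  "pat m n \<sigma> A \<longleftrightarrow> (\<forall>i<n. \<forall>j<n. A $$ (i, j) \<noteq> 0 \<longrightarrow> i div m = \<sigma> (j div m))"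

lemma pat_mult:
  assumes "A \<in> carrier_mat n n" "B \<in> carrier_mat n n" "pat m n \<sigma> A" "pat m n \<tau> B"
  shows "pat m n (\<sigma> \<circ> \<tau>) (A * B)"
  unfolding pat_def
proof (intro allI impI)
  fix i j assume ij: "i < n" "j < n" and nz: "(A * B) $$ (i, j) \<noteq> 0"
  then obtain k where k: "k < n" "A $$ (i, k) \<noteq> 0" "B $$ (k, j) \<noteq> 0"
    using mult_nonzero assms(1,2) by blast
  have "i div m = \<sigma> (k div m)" using assms(3) ij k unfolding pat_def by blast
  moreover have "k div m = \<tau> (j div m)" using assms(4) ij k unfolding pat_def by blast
  ultimately show "i div m = (\<sigma> \<circ> \<tau>) (j div m)" by simp
qed

lemma B_carrier: "b \<in> B_blocks m d \<Longrightarrow> b \<in> carrier_mat (m*d) (m*d)"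
  by (simp add: B_blocks_def)

lemma B_D: "b \<in> B_blocks m d \<Longrightarrow> i < m*d \<Longrightarrow> j < m*d \<Longrightarrow> b $$ (i,j) \<noteq> 0 \<Longrightarrow> i div m = j div m \<and> i \<le> j"
  by (simp add: B_blocks_def)

lemma B_pat: "b \<in> B_blocks m d \<Longrightarrow> pat m (m*d) id b"
  by (auto simp: B_blocks_def pat_def)

lemma B_one: "1\<^sub>m (m*d) \<in> B_blocks m d"
proof -
  have "invertible_mat (1\<^sub>m (m*d) :: 'a mat)"
    using inv_char[of "1\<^sub>m (m*d)" "m*d"] by (auto intro!: bexI[of _ "1\<^sub>m (m*d)"])
  then show ?thesis by (auto simp: B_blocks_def)
qed

lemma B_mult:
  assumes "b \<in> B_blocks m d" "c \<in> B_blocks m d"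
  shows "b * c \<in> B_blocks m d"
proof -
  have C: "b \<in> carrier_mat (m*d) (m*d)" "c \<in> carrier_mat (m*d) (m*d)" using assms by (auto simp: B_blocks_def)
  have "invertible_mat (b * c)" using invertible_mult[OF C] assms by (auto simp: B_blocks_def)
  moreover
  have "\<forall>i<m*d. \<forall>j<m*d. (b * c) $$ (i, j) \<noteq> 0 \<longrightarrow> i div m = j div m \<and> i \<le> j"
  proof (intro allI impI)
    fix i j assume ij: "i < m*d" "j < m*d" and nz: "(b * c) $$ (i, j) \<noteq> 0"
    then obtain k where k: "k < m*d" "b $$ (i, k) \<noteq> 0" "c $$ (k, j) \<noteq> 0"
      using mult_nonzero C by blast
    have "i div m = k div m \<and> i \<le> k" using B_D[OF assms(1) ij(1) k(1,2)] .
    moreover have "k div m = j div m \<and> k \<le> j" using B_D[OF assms(2) k(1) ij(2) k(3)] .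
    ultimately show "i div m = j div m \<and> i \<le> j" by simp
  qed
  ultimately show ?thesis using C by (auto simp: B_blocks_def)
qed

lemma B_diag:
  assumes b: "(b :: 'a::field mat) \<in> B_blocks m d" and i: "i < m*d"
  shows "b $$ (i, i) \<noteq> 0"
proof -
  have C: "b \<in> carrier_mat (m*d) (m*d)" using b by (simp add: B_blocks_def)
  obtain c where c: "c \<in> carrier_mat (m*d) (m*d)" "b * c = 1\<^sub>m (m*d)"
    using b inv_char[OF C] by (auto simp: B_blocks_def)
  have "det b * det c = 1" using det_mult[OF C c(1)] c(2) by simp
  then have "det b \<noteq> 0" by auto
  moreover have "upper_triangular b"
    unfolding upper_triangular_def
  proof (intro allI impI)
    fix i j assume "i < dim_row b" "j < i"
    then show "b $$ (i, j) = 0" using B_D[OF b, of i j] C by fastforce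
  qed
  ultimately have "prod_list (diag_mat b) \<noteq> 0" using det_upper_triangular[OF _ C] by simp
  then have "0 \<notin> set (diag_mat b)" by (simp add: prod_list_zero_iff)
  then show ?thesis using i C unfolding diag_mat_def by auto
qed

lemma B_inv:
  assumes b: "(b :: 'a::field mat) \<in> B_blocks m d" and c: "c \<in> carrier_mat (m*d) (m*d)"
    and cb: "c * b = 1\<^sub>m (m*d)"
  shows "c \<in> B_blocks m d"
proof -
  let ?n = "m*d"
  have C: "b \<in> carrier_mat ?n ?n" using b by (simp add: B_blocks_def)
  have bc: "b * c = 1\<^sub>m ?n" using mat_mult_left_right_inverse[OF c C cb] .
  have inv: "invertible_mat c" using inv_char[OF c] C cb by blast
  have key: "\<forall>i<?n. c $$ (i, j) \<noteq> 0 \<longrightarrow> i div m = j div m \<and> i \<le> j" if "j < ?n" for j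
    using that
  proof (induction j rule: less_induct)
    case (less j)
    show ?case
    proof (intro allI impI, rule ccontr)
      fix i assume i: "i < ?n" and nz: "c $$ (i, j) \<noteq> 0" and bad: "\<not> (i div m = j div m \<and> i \<le> j)"
      have "(c * b) $$ (i, j) = (\<Sum>k<?n. c $$ (i, k) * b $$ (k, j))"
        using mult_entry[OF c C i less.prems] .
      also have "\<dots> = c $$ (i, j) * b $$ (j, j)"
      proof (rule sum_single)
        fix k assume k: "k \<in> {..<?n}" "k \<noteq> j"
        show "c $$ (i, k) * b $$ (k, j) = 0"
        proof (rule ccontr)
          assume "c $$ (i, k) * b $$ (k, j) \<noteq> 0"
          then have h: "c $$ (i, k) \<noteq> 0" "b $$ (k, j) \<noteq> 0" by auto
          then have "k div m = j div m" "k \<le> j" using b k less.prems unfolding B_blocks_def by auto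
          then have "k < j" using k by auto
          then have "i div m = k div m \<and> i \<le> k" using less.IH[of k] less.prems h i by auto
          then show False using bad \<open>k div m = j div m\<close> \<open>k \<le> j\<close> by auto
        qed
      qed (use less.prems in auto)
      finally have "(c * b) $$ (i, j) = c $$ (i, j) * b $$ (j, j)" .
      moreover have "i \<noteq> j" using bad by auto
      then have "(c * b) $$ (i, j) = 0" using cb i less.prems by simp
      moreover have "b $$ (j, j) \<noteq> 0" using B_diag[OF b less.prems] .
      ultimately show False using nz by simp
    qed
  qed
  have "\<forall>i<?n. \<forall>j<?n. c $$ (i, j) \<noteq> 0 \<longrightarrow> i div m = j div m \<and> i \<le> j"
    using key by blast
  then show ?thesis unfolding B_blocks_def mem_Collect_eq using c inv by (intro conjI)
qed

lemma B_has_inv: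
  assumes b: "(b :: 'a::field mat) \<in> B_blocks m d"
  shows "\<exists>c \<in> B_blocks m d. b * c = 1\<^sub>m (m*d) \<and> c * b = 1\<^sub>m (m*d)"
proof -
  have C: "b \<in> carrier_mat (m*d) (m*d)" using b by (simp add: B_blocks_def)
  obtain c where c: "c \<in> carrier_mat (m*d) (m*d)" "b * c = 1\<^sub>m (m*d)"
    using b inv_char[OF C] by (auto simp: B_blocks_def)
  have cb: "c * b = 1\<^sub>m (m*d)" using mat_mult_left_right_inverse[OF C c] .
  show ?thesis using B_inv[OF b c(1) cb] c(2) cb by (intro bexI[of _ c]) simp_all
qed

lemma rowop_inv:
  assumes q: "q < n" and aq: "a q = 0"
  shows "rowop n q a * rowop n q (\<lambda>i. - a i) = (1\<^sub>m n :: 'a::field mat)"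
proof (rule eq_matI)
  fix i j assume ij: "i < dim_row (1\<^sub>m n :: 'a mat)" "j < dim_col (1\<^sub>m n :: 'a mat)"
  then have ij: "i < n" "j < n" by auto
  show "(rowop n q a * rowop n q (\<lambda>i. - a i)) $$ (i, j) = (1\<^sub>m n :: 'a mat) $$ (i, j)"
    using rowop_mult[OF rowop_carrier[of n q "\<lambda>i. - a i"] q ij, of a] ij q aq by (simp add: rowop_index)
qed (auto simp: rowop_def)

lemma colop_inv:
  assumes q: "q < n" and bq: "b q = 0"
  shows "colop n q b * colop n q (\<lambda>i. - b i) = (1\<^sub>m n :: 'a::field mat)"
proof (rule eq_matI)
  fix i j assume ij: "i < dim_row (1\<^sub>m n :: 'a mat)" "j < dim_col (1\<^sub>m n :: 'a mat)"
  then have ij: "i < n" "j < n" by auto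
  show "(colop n q b * colop n q (\<lambda>i. - b i)) $$ (i, j) = (1\<^sub>m n :: 'a mat) $$ (i, j)"
  proof -
    have e: "(colop n q b * colop n q (\<lambda>i. - b i)) $$ (i, j) = colop n q b $$ (i,j) + colop n q b $$ (i,q) * (- b j)"
      using colop_mult[OF colop_carrier[of n q b] q ij, of "\<lambda>i. - b i"] .
    have c1: "colop n q b $$ (i,j) = (if i = j then 1 else 0) + (if i = q then b j else 0)"
      using ij by (rule colop_index)
    have c2: "colop n q b $$ (i,q) = (if i = q then 1 else 0)"
      using colop_index[OF ij(1) q, of q b] bq by simp
    show ?thesis unfolding e c1 c2 using ij by (cases "i = q") auto
  qed
qed (auto simp: colop_def)

lemma rowop_B:
  assumes q: "q < m*d" and aq: "a q = 0"
    and a: "\<And>i. i < m*d \<Longrightarrow> a i \<noteq> 0 \<Longrightarrow> i < q \<and> i div m = q div m"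
  shows "rowop (m*d) q a \<in> B_blocks m d"
proof -
  have "invertible_mat (rowop (m*d) q a)"
    unfolding inv_char[OF rowop_carrier] using rowop_inv[where q=q and n="m*d" and a=a, OF q aq] rowop_carrier[of "m*d" q "\<lambda>i. - a i"] by blast
  moreover have "\<forall>i<m*d. \<forall>j<m*d. rowop (m*d) q a $$ (i, j) \<noteq> 0 \<longrightarrow> i div m = j div m \<and> i \<le> j"
  proof (intro allI impI)
    fix i j assume ij: "i < m*d" "j < m*d" and nz: "rowop (m*d) q a $$ (i, j) \<noteq> 0"
    show "i div m = j div m \<and> i \<le> j"
    proof (cases "i = j")
      case False
      have e: "rowop (m*d) q a $$ (i, j) = (if j = q then a i else 0)"
        using rowop_index[OF ij, of q a] False by simp
      have jq: "j = q" using nz e by (cases "j = q") simp_all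
      have "a i \<noteq> 0" using nz e jq by simp
      then have "i < q \<and> i div m = q div m" using a[OF ij(1)] by blast
      then show ?thesis using jq by simp
    qed simp
  qed
  ultimately show ?thesis unfolding B_blocks_def mem_Collect_eq using rowop_carrier by blast
qed

lemma colop_B:
  assumes q: "q < m*d" and bq: "b q = 0"
    and b: "\<And>l. l < m*d \<Longrightarrow> b l \<noteq> 0 \<Longrightarrow> q < l \<and> q div m = l div m"
  shows "colop (m*d) q b \<in> B_blocks m d"
proof -
  have "invertible_mat (colop (m*d) q b)"
    unfolding inv_char[OF colop_carrier] using colop_inv[where q=q and n="m*d" and b=b, OF q bq] colop_carrier[of "m*d" q "\<lambda>i. - b i"] by blast
  moreover have "\<forall>i<m*d. \<forall>j<m*d. colop (m*d) q b $$ (i, j) \<noteq> 0 \<longrightarrow> i div m = j div m \<and> i \<le> j"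
  proof (intro allI impI)
    fix i j assume ij: "i < m*d" "j < m*d" and nz: "colop (m*d) q b $$ (i, j) \<noteq> 0"
    show "i div m = j div m \<and> i \<le> j"
    proof (cases "i = j")
      case False
      have e: "colop (m*d) q b $$ (i, j) = (if i = q then b j else 0)"
        using colop_index[OF ij, of q b] False by simp
      have iq: "i = q" using nz e by (cases "i = q") simp_all
      have "b j \<noteq> 0" using nz e iq by simp
      then have "q < j \<and> q div m = j div m" using b[OF ij(2)] by blast
      then show ?thesis using iq by simp
    qed simp
  qed
  ultimately show ?thesis unfolding B_blocks_def mem_Collect_eq using colop_carrier by blast
qed

lemma wreath_props:
  assumes m: "0 < m" and w: "w \<in> wreath m d"
  shows "\<exists>\<sigma>. \<sigma> permutes {..<d} \<and> w permutes {..<m*d} \<and> (\<forall>j<m*d. w j div m = \<sigma> (j div m))"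
proof -
  obtain ws \<sigma> where wdef: "w = wreath_perm m d ws \<sigma>" and s: "\<sigma> permutes {..<d}"
    and ws: "\<And>i. i < d \<Longrightarrow> ws i permutes {..<m}"
    using w unfolding wreath_def by blast
  have bnd: "\<sigma> (x div m) < d" "ws (\<sigma> (x div m)) (x mod m) < m" if "x < m*d" for x
  proof -
    have "x div m < d" using that m by (simp add: less_mult_imp_div_less mult.commute)
    then show "\<sigma> (x div m) < d" using permutes_in_image[OF s] by simp
    then show "ws (\<sigma> (x div m)) (x mod m) < m"
      using permutes_in_image[OF ws] m by simp
  qed
  have wx: "w x = \<sigma> (x div m) * m + ws (\<sigma> (x div m)) (x mod m)" if "x < m*d" for x
    using that by (simp add: wdef wreath_perm_def)
  have divw: "w x div m = \<sigma> (x div m)" and modw: "w x mod m = ws (\<sigma> (x div m)) (x mod m)"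
    if "x < m*d" for x
    using wx[OF that] bnd[OF that] by auto
  have lt: "w x < m*d" if "x < m*d" for x
  proof -
    have "w x < \<sigma> (x div m) * m + m" using wx[OF that] bnd[OF that] by simp
    also have "\<dots> = (\<sigma> (x div m) + 1) * m" by simp
    also have "\<dots> \<le> d * m" using bnd[OF that] by (intro mult_right_mono) auto
    finally show ?thesis by (simp add: mult.commute)
  qed
  have inj: "inj_on w {..<m*d}"
  proof (rule inj_onI)
    fix x y assume x: "x \<in> {..<m*d}" and y: "y \<in> {..<m*d}" and e: "w x = w y"
    have "\<sigma> (x div m) = \<sigma> (y div m)" using divw[of x] divw[of y] x y e by (metis lessThan_iff)
    then have dd: "x div m = y div m" using permutes_inj[OF s] by (meson injD)
    have "x div m < d" using x m by (simp add: less_mult_imp_div_less mult.commute)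
    have "ws (\<sigma> (x div m)) (x mod m) = ws (\<sigma> (x div m)) (y mod m)" using modw[of x] modw[of y] x y e dd by (metis lessThan_iff)
    then have "x mod m = y mod m" using permutes_inj[OF ws[OF bnd(1)]] x by (meson injD lessThan_iff)
    then show "x = y" using dd by (metis div_mult_mod_eq)
  qed
  have sub: "w ` {..<m*d} \<subseteq> {..<m*d}" using lt by auto
  have img: "w ` {..<m*d} = {..<m*d}" using endo_inj_surj[OF _ sub inj] by simp
  have out: "\<And>x. x \<notin> {..<m*d} \<Longrightarrow> w x = x" by (simp add: wdef wreath_perm_def)
  have "bij_betw w {..<m*d} {..<m*d}" using inj img by (simp add: bij_betw_def)
  then have perm: "w permutes {..<m*d}" using bij_imp_permutes out by blast
  have all: "\<forall>j<m*d. w j div m = \<sigma> (j div m)" by (intro allI impI divw)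
  show ?thesis by (rule exI[of _ \<sigma>], rule conjI[OF s conjI[OF perm all]])
qed

lemma prod_inv:
  assumes A: "(A :: 'a::field mat) \<in> carrier_mat n n" and B: "B \<in> carrier_mat n n"
    and A': "A' \<in> carrier_mat n n" and B': "B' \<in> carrier_mat n n"
    and AA': "A * A' = 1\<^sub>m n" and BB': "B * B' = 1\<^sub>m n"
  shows "(A * B) * (B' * A') = 1\<^sub>m n"
proof -
  have "(A * B) * (B' * A') = A * (B * (B' * A'))"
    using A B A' B' by (simp add: assoc_mult_mat[of _ n n _ n _ n])
  also have "B * (B' * A') = (B * B') * A'"
    using assoc_mult_mat[OF B B' A'] by simp
  also have "A * ((B * B') * A') = 1\<^sub>m n" using A A' BB' AA' by simp
  finally show ?thesis .
qed

definition Xs :: "nat \<Rightarrow> nat \<Rightarrow> 'a::field mat set" where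
  "Xs m d = {A. A \<in> carrier_mat (m*d) (m*d) \<and> invertible_mat A \<and>
      (\<exists>\<sigma>. \<sigma> permutes {..<d} \<and> pat m (m*d) \<sigma> A)}"

lemma Xs_carrier: "A \<in> Xs m d \<Longrightarrow> A \<in> carrier_mat (m*d) (m*d)"
  by (simp add: Xs_def)

lemma Xs_mult:
  assumes "A \<in> Xs m d" "B \<in> Xs m d"
  shows "A * B \<in> Xs m d"
proof -
  obtain \<sigma> where s: "\<sigma> permutes {..<d}" "pat m (m*d) \<sigma> A" using assms(1) by (auto simp: Xs_def)
  obtain \<tau> where t: "\<tau> permutes {..<d}" "pat m (m*d) \<tau> B" using assms(2) by (auto simp: Xs_def)
  have C: "A \<in> carrier_mat (m*d) (m*d)" "B \<in> carrier_mat (m*d) (m*d)" using assms by (auto simp: Xs_def)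
  have "pat m (m*d) (\<sigma> \<circ> \<tau>) (A * B)" using pat_mult[OF C s(2) t(2)] .
  moreover have "\<sigma> \<circ> \<tau> permutes {..<d}" using permutes_compose[OF t(1) s(1)] .
  moreover have "invertible_mat (A * B)" using invertible_mult[OF C] assms by (auto simp: Xs_def)
  ultimately show ?thesis using C unfolding Xs_def mem_Collect_eq by (meson mult_carrier_mat)
qed

lemma B_Xs: "b \<in> B_blocks m d \<Longrightarrow> b \<in> Xs m d"
  unfolding Xs_def mem_Collect_eq using B_pat[of b m d] B_carrier[of b m d] permutes_id[of "{..<d}"]
  by (auto simp: B_blocks_def id_def)

lemma mono_inv:
  assumes M: "monomial_mat n w (M :: 'a::field mat)" and w: "w permutes {..<n}"
  shows "\<exists>M' \<in> carrier_mat n n. M' * M = 1\<^sub>m n \<and> M * M' = 1\<^sub>m n \<and>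
           (\<forall>i<n. \<forall>j<n. M' $$ (i, j) \<noteq> 0 \<longrightarrow> j = w i)"
proof -
  define M' where "M' = mat n n (\<lambda>(i,j). if j = w i then inverse (M $$ (j,i)) else (0 :: 'a))"
  have MC: "M \<in> carrier_mat n n" using M by (simp add: monomial_mat_def)
  have M'C: "M' \<in> carrier_mat n n" by (simp add: M'_def)
  have Mnz: "\<And>i j. i < n \<Longrightarrow> j < n \<Longrightarrow> M $$ (i, j) \<noteq> 0 \<longleftrightarrow> i = w j"
    using M by (simp add: monomial_mat_def)
  have win: "\<And>i. i < n \<Longrightarrow> w i < n" using permutes_in_image[OF w] by simp
  have winj: "\<And>i k. w i = w k \<Longrightarrow> i = k" using permutes_inj[OF w] by (meson injD)
  have "M' * M = 1\<^sub>m n"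
  proof (rule eq_matI)
    fix i k assume "i < dim_row (1\<^sub>m n :: 'a mat)" "k < dim_col (1\<^sub>m n :: 'a mat)"
    then have ik: "i < n" "k < n" by auto
    have "(M' * M) $$ (i, k) = (\<Sum>j<n. M' $$ (i, j) * M $$ (j, k))"
      using mult_entry[OF M'C MC ik] .
    also have "\<dots> = M' $$ (i, w i) * M $$ (w i, k)"
      by (rule sum_single) (use ik win in \<open>auto simp: M'_def\<close>)
    also have "\<dots> = inverse (M $$ (w i, i)) * M $$ (w i, k)"
      using ik win by (simp add: M'_def)
    also have "\<dots> = (1\<^sub>m n :: 'a mat) $$ (i, k)"
    proof (cases "i = k")
      case True
      then show ?thesis using Mnz[OF win[OF ik(1)] ik(1)] ik by simp
    next
      case False
      then have "M $$ (w i, k) = 0" using Mnz[OF win[OF ik(1)] ik(2)] winj by blast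
      then show ?thesis using False ik by simp
    qed
    finally show "(M' * M) $$ (i, k) = (1\<^sub>m n :: 'a mat) $$ (i, k)" .
  qed (use M'C MC in auto)
  moreover then have "M * M' = 1\<^sub>m n" using mat_mult_left_right_inverse[OF M'C MC] by simp
  moreover have "\<forall>i<n. \<forall>j<n. M' $$ (i, j) \<noteq> 0 \<longrightarrow> j = w i"
    by (auto simp: M'_def split: if_splits)
  ultimately show ?thesis using M'C by blast
qed


lemma N_Xs:
  assumes m: "0 < m" and A: "(A :: 'a::field mat) \<in> N_wr m d"
  shows "A \<in> Xs m d \<and> (\<exists>B\<in>Xs m d. A * B = 1\<^sub>m (m*d) \<and> B * A = 1\<^sub>m (m*d))"
proof -
  obtain w where w: "w \<in> wreath m d" and M: "monomial_mat (m*d) w A"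
    using A by (auto simp: N_wr_def)
  obtain \<sigma> where s: "\<sigma> permutes {..<d}" and wp: "w permutes {..<m*d}"
    and wd: "\<forall>j<m*d. w j div m = \<sigma> (j div m)"
    using wreath_props[OF m w] by blast
  obtain M' where M'C: "M' \<in> carrier_mat (m*d) (m*d)" and M'A: "M' * A = 1\<^sub>m (m*d)"
    and AM': "A * M' = 1\<^sub>m (m*d)" and M'nz: "\<forall>i<m*d. \<forall>j<m*d. M' $$ (i, j) \<noteq> 0 \<longrightarrow> j = w i"
    using mono_inv[OF M wp] by blast
  have AC: "A \<in> carrier_mat (m*d) (m*d)" using M by (simp add: monomial_mat_def)
  have "pat m (m*d) \<sigma> A"
    unfolding pat_def
  proof (intro allI impI)
    fix i j assume ij: "i < m*d" "j < m*d" and nz: "A $$ (i, j) \<noteq> 0"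
    then have "i = w j" using M by (simp add: monomial_mat_def)
    then show "i div m = \<sigma> (j div m)" using wd ij by simp
  qed
  moreover have "invertible_mat A" using inv_char[OF AC] M'C AM' by blast
  ultimately have AX: "A \<in> Xs m d" using AC s unfolding Xs_def by blast
  have "pat m (m*d) (inv_into UNIV \<sigma>) M'"
    unfolding pat_def
  proof (intro allI impI)
    fix i j assume ij: "i < m*d" "j < m*d" and nz: "M' $$ (i, j) \<noteq> 0"
    then have "j = w i" using M'nz by blast
    then have "j div m = \<sigma> (i div m)" using wd ij by simp
    then show "i div m = inv_into UNIV \<sigma> (j div m)" using permutes_inverses(2)[OF s] by simp
  qed
  moreover have "invertible_mat M'" using inv_char[OF M'C] AC M'A by blast
  ultimately have "M' \<in> Xs m d" using M'C permutes_inv[OF s] unfolding Xs_def by blast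
  then show ?thesis using AX AM' M'A by blast
qed

lemma G_sub:
  assumes m: "0 < m" and A: "(A :: 'a::field mat) \<in> G_wr m d"
  shows "A \<in> Xs m d \<and> (\<exists>B\<in>Xs m d. A * B = 1\<^sub>m (m*d) \<and> B * A = 1\<^sub>m (m*d))"
  using A unfolding G_wr_def
proof (induction rule: gen_group.induct)
  case one
  have "1\<^sub>m (m*d) \<in> Xs m d" using B_Xs[OF B_one] .
  then show ?case by (intro conjI bexI[of _ "1\<^sub>m (m*d)"]) simp_all
next
  case (gen A)
  then show ?case
  proof
    assume b: "A \<in> B_blocks m d"
    then obtain c where c: "c \<in> B_blocks m d" "A * c = 1\<^sub>m (m*d)" "c * A = 1\<^sub>m (m*d)"
      using B_has_inv by blast
    show ?thesis using B_Xs[OF b] B_Xs[OF c(1)] c(2,3) by blast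
  next
    assume "A \<in> N_wr m d"
    then show ?thesis using N_Xs[OF m] by blast
  qed
next
  case (mult A B)
  obtain A' where A': "A' \<in> Xs m d" "A * A' = 1\<^sub>m (m*d)" "A' * A = 1\<^sub>m (m*d)" using mult.IH(1) by blast
  obtain B' where B': "B' \<in> Xs m d" "B * B' = 1\<^sub>m (m*d)" "B' * B = 1\<^sub>m (m*d)" using mult.IH(2) by blast
  have AX: "A \<in> Xs m d" and BX: "B \<in> Xs m d" using mult.IH by blast+
  note C = Xs_carrier[OF AX] Xs_carrier[OF BX] Xs_carrier[OF A'(1)] Xs_carrier[OF B'(1)]
  have "(A * B) * (B' * A') = 1\<^sub>m (m*d)" using prod_inv[OF C(1,2,3,4) A'(2) B'(2)] .
  moreover have "(B' * A') * (A * B) = 1\<^sub>m (m*d)" using prod_inv[OF C(4,3,2,1) B'(3) A'(3)] .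
  ultimately show ?case using Xs_mult[OF AX BX] Xs_mult[OF B'(1) A'(1)] by blast
next
  case (inv A B)
  obtain A' where A': "A' \<in> Xs m d" "A * A' = 1\<^sub>m (m*d)" "A' * A = 1\<^sub>m (m*d)" using inv.IH by blast
  have AX: "A \<in> Xs m d" using inv.IH by blast
  note C = Xs_carrier[OF AX] Xs_carrier[OF A'(1)]
  have "B = B * (A * A')" using A'(2) inv.hyps(2) by simp
  also have "\<dots> = (B * A) * A'" using assoc_mult_mat[OF inv.hyps(2) C(1) C(2)] by simp
  also have "\<dots> = A'" using inv.hyps(4) C(2) by simp
  finally have "B = A'" .
  then show ?case using A' AX inv.hyps(3,4) by blast
qed


lemma perm_le:
  fixes f g :: "nat \<Rightarrow> 'b" and j n :: nat
  assumes inj: "inj_on f {..<n}" and h: "\<And>j. j < n \<Longrightarrow> \<exists>k\<le>j. g k = f j"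
  shows "j < n \<Longrightarrow> f j = g j"
proof (induction j rule: less_induct)
  case (less j)
  obtain k where k: "k \<le> j" "g k = f j" using h[OF less.prems] by blast
  show ?case
  proof (cases "k < j")
    case True
    then have "f k = g k" using less.IH less.prems by simp
    then have "f k = f j" using k by simp
    then have "k = j" using inj True less.prems by (auto dest: inj_onD)
    then show ?thesis using True by simp
  next
    case False
    then show ?thesis using k by simp
  qed
qed

lemma disj:
  assumes m: "0 < m" and w: "w \<in> wreath m d" and w': "w' \<in> wreath m d"
    and A1: "(A :: 'a::field mat) \<in> double_coset m d w" and A2: "A \<in> double_coset m d w'"
  shows "w = w'"
proof -
  let ?n = "m*d"
  obtain b1 M b2 where b1: "b1 \<in> B_blocks m d" and b2: "b2 \<in> B_blocks m d"
    and M: "monomial_mat ?n w M" and A: "A = b1 * M * b2"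
    using A1 unfolding double_coset_def by blast
  obtain b1' M' b2' where b1': "b1' \<in> B_blocks m d" and b2': "b2' \<in> B_blocks m d"
    and M': "monomial_mat ?n w' M'" and A': "A = b1' * M' * b2'"
    using A2 unfolding double_coset_def by blast
  obtain c1 where c1: "c1 \<in> B_blocks m d" "c1 * b1' = 1\<^sub>m ?n" using B_has_inv[OF b1'] by blast
  obtain c2 where c2: "c2 \<in> B_blocks m d" "b2 * c2 = 1\<^sub>m ?n" using B_has_inv[OF b2] by blast
  note C = B_carrier[OF b1] B_carrier[OF b2] B_carrier[OF b1'] B_carrier[OF b2'] B_carrier[OF c1(1)] B_carrier[OF c2(1)]
  have MC: "M \<in> carrier_mat ?n ?n" using M by (simp add: monomial_mat_def)
  have M'C: "M' \<in> carrier_mat ?n ?n" using M' by (simp add: monomial_mat_def)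
  define P where "P = c1 * b1"
  define Q where "Q = b2' * c2"
  have P: "P \<in> B_blocks m d" using B_mult[OF c1(1) b1] by (simp add: P_def)
  have Q: "Q \<in> B_blocks m d" using B_mult[OF b2' c2(1)] by (simp add: Q_def)
  have "P * M = c1 * (b1 * M * b2) * c2"
  proof -
    have "c1 * (b1 * M * b2) * c2 = c1 * (b1 * M) * (b2 * c2)"
      using C MC by (simp add: assoc_mult_mat[of _ ?n ?n _ ?n _ ?n])
    also have "\<dots> = (c1 * b1) * M" using C MC c2(2) by (simp add: assoc_mult_mat[of _ ?n ?n _ ?n _ ?n])
    finally show ?thesis by (simp add: P_def)
  qed
  also have "\<dots> = c1 * (b1' * M' * b2') * c2" using A A' by simp
  also have "\<dots> = M' * Q"
  proof -
    have "c1 * (b1' * M' * b2') * c2 = (c1 * b1') * M' * (b2' * c2)"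
      using C M'C by (simp add: assoc_mult_mat[of _ ?n ?n _ ?n _ ?n])
    also have "\<dots> = M' * Q" using C M'C c1(2) by (simp add: Q_def)
    finally show ?thesis .
  qed
  finally have PM: "P * M = M' * Q" .
  obtain \<sigma> where wp: "w permutes {..<?n}" using wreath_props[OF m w] by blast
  obtain \<sigma>' where wp': "w' permutes {..<?n}" using wreath_props[OF m w'] by blast
  have PC: "P \<in> carrier_mat ?n ?n" and QC: "Q \<in> carrier_mat ?n ?n" using P Q B_carrier by blast+
  have key: "\<exists>k\<le>j. w' k = w j" if j: "j < ?n" for j
  proof -
    have wj: "w j < ?n" using permutes_in_image[OF wp] j by simp
    have "(P * M) $$ (w j, j) = (\<Sum>k<?n. P $$ (w j, k) * M $$ (k, j))"
      using mult_entry[OF PC MC wj j] .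
    also have "\<dots> = P $$ (w j, w j) * M $$ (w j, j)"
      by (rule sum_single) (use M j wj in \<open>auto simp: monomial_mat_def\<close>)
    finally have "(P * M) $$ (w j, j) \<noteq> 0"
      using B_diag[OF P wj] M j wj by (simp add: monomial_mat_def)
    then have "(M' * Q) $$ (w j, j) \<noteq> 0" using PM by simp
    then obtain k where k: "k < ?n" "M' $$ (w j, k) \<noteq> 0" "Q $$ (k, j) \<noteq> 0"
      using mult_nonzero[OF M'C QC wj j] by blast
    have "w j = w' k" using M' k wj by (simp add: monomial_mat_def)
    moreover have "k \<le> j" using B_D[OF Q k(1) j k(3)] by simp
    ultimately show ?thesis by auto
  qed
  have eq: "w j = w' j" if "j < ?n" for j
    using perm_le[OF permutes_inj_on[OF wp] key that] .
  show "w = w'"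
  proof
    fix x show "w x = w' x"
    proof (cases "x < ?n")
      case True then show ?thesis using eq by simp
    next
      case False then show ?thesis using permutes_not_in[OF wp] permutes_not_in[OF wp'] by simp
    qed
  qed
qed

lemma union_sub:
  assumes w: "w \<in> wreath m d" and A: "(A :: 'a::field mat) \<in> double_coset m d w"
  shows "A \<in> G_wr m d"
proof -
  obtain b1 M b2 where b1: "b1 \<in> B_blocks m d" and b2: "b2 \<in> B_blocks m d"
    and M: "monomial_mat (m*d) w M" and A: "A = b1 * M * b2"
    using A unfolding double_coset_def by blast
  have "M \<in> N_wr m d" using w M by (auto simp: N_wr_def)
  then show ?thesis unfolding A G_wr_def using b1 b2
    by (intro gen_group.mult gen_group.gen) auto
qed

definition clean :: "nat \<Rightarrow> nat \<Rightarrow> (nat \<Rightarrow> nat) \<Rightarrow> 'a::field mat \<Rightarrow> bool" where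
  "clean n k p C \<longleftrightarrow> (\<forall>j<k. p j < n \<and> C $$ (p j, j) \<noteq> 0 \<and> (\<forall>i<n. i \<noteq> p j \<longrightarrow> C $$ (i, j) = 0)
      \<and> (\<forall>l<n. l \<noteq> j \<longrightarrow> C $$ (p j, l) = 0))"

lemma col_nonzero:
  assumes C: "(C :: 'a::field mat) \<in> carrier_mat n n" and inv: "invertible_mat C" and k: "k < n"
  shows "\<exists>i<n. C $$ (i, k) \<noteq> 0"
proof -
  obtain B where B: "B \<in> carrier_mat n n" "C * B = 1\<^sub>m n" using inv inv_char[OF C] by blast
  have "B * C = 1\<^sub>m n" using mat_mult_left_right_inverse[OF C B] .
  then have "(B * C) $$ (k, k) \<noteq> 0" using k by simp
  then show ?thesis using mult_nonzero[OF B(1) C k k] by blast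
qed

lemma step:
  assumes m: "0 < m" and s: "\<sigma> permutes {..<d}"
    and C: "(C :: 'a::field mat) \<in> carrier_mat (m*d) (m*d)" and inv: "invertible_mat C"
    and pt: "pat m (m*d) \<sigma> C" and cl: "clean (m*d) k p C" and k: "k < m*d"
  shows "\<exists>b1 b2 C' p'. b1 \<in> B_blocks m d \<and> b2 \<in> B_blocks m d \<and> C = b1 * C' * b2 \<and>
     C' \<in> carrier_mat (m*d) (m*d) \<and> invertible_mat C' \<and> pat m (m*d) \<sigma> C' \<and> clean (m*d) (Suc k) p' C'"
proof -
  let ?n = "m*d"
  define S where "S = {i. i < ?n \<and> C $$ (i, k) \<noteq> 0}"
  have Sne: "S \<noteq> {}" using col_nonzero[OF C inv k] by (auto simp: S_def)
  have Sfin: "finite S" by (simp add: S_def)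
  define q where "q = Max S"
  have qS: "q \<in> S" using Max_in[OF Sfin Sne] by (simp add: q_def)
  then have q: "q < ?n" and Cqk: "C $$ (q, k) \<noteq> 0" by (auto simp: S_def)
  have qmax: "\<And>i. i < ?n \<Longrightarrow> C $$ (i, k) \<noteq> 0 \<Longrightarrow> i \<le> q"
    using Max_ge[OF Sfin] by (auto simp: S_def q_def)
  have blkd: "\<And>i. i < ?n \<Longrightarrow> i div m < d" using m by (simp add: less_mult_imp_div_less mult.commute)
  have pC: "\<And>i j. i < ?n \<Longrightarrow> j < ?n \<Longrightarrow> C $$ (i, j) \<noteq> 0 \<Longrightarrow> i div m = \<sigma> (j div m)"
    using pt unfolding pat_def by blast
  have qblk: "q div m = \<sigma> (k div m)" using pC[OF q k Cqk] .
  define a where "a i = (if i < q then - (C $$ (i, k) / C $$ (q, k)) else 0)" for i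
  have aq: "a q = 0" by (simp add: a_def)
  have acond: "i < q \<and> i div m = q div m" if i: "i < ?n" and ai: "a i \<noteq> 0" for i
  proof -
    have iq: "i < q" using ai by (simp add: a_def split: if_splits)
    have "C $$ (i, k) \<noteq> 0" using ai iq by (simp add: a_def)
    then have "i div m = \<sigma> (k div m)" using pC[OF i k] by blast
    then show ?thesis using iq qblk by simp
  qed
  define L where "L = rowop ?n q a"
  define Li where "Li = rowop ?n q (\<lambda>i. - a i)"
  have LB: "L \<in> B_blocks m d" unfolding L_def by (rule rowop_B[where m=m and d=d and q=q and a=a, OF q aq acond])
  have LiB: "Li \<in> B_blocks m d" unfolding Li_def by (rule rowop_B[where m=m and d=d and q=q and a="\<lambda>i. - a i", OF q]) (use aq acond in auto)
  have LiL: "Li * L = 1\<^sub>m ?n"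
    using rowop_inv[where q=q and n="?n" and a="\<lambda>i. - a i", OF q] aq by (simp add: Li_def L_def)
  define C1 where "C1 = L * C"
  have C1C: "C1 \<in> carrier_mat ?n ?n" unfolding C1_def L_def using rowop_carrier C by (rule mult_carrier_mat)
  have C1e: "C1 $$ (i, j) = C $$ (i, j) + a i * C $$ (q, j)" if "i < ?n" "j < ?n" for i j
    unfolding C1_def L_def using rowop_mult[OF C q that] .
  have C1k: "C1 $$ (i, k) = (if i = q then C $$ (q, k) else 0)" if i: "i < ?n" for i
  proof -
    have e: "C1 $$ (i, k) = C $$ (i, k) + a i * C $$ (q, k)" using C1e[OF i k] .
    consider "i < q" | "i = q" | "q < i" by linarith
    then show ?thesis
    proof cases
      case 1 then show ?thesis using e Cqk by (simp add: a_def)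
    next
      case 2 then show ?thesis using e aq by simp
    next
      case 3
      then have "C $$ (i, k) = 0" using qmax[OF i] by fastforce
      then show ?thesis using e 3 by (simp add: a_def)
    qed
  qed
  have C1pat: "pat m ?n \<sigma> C1"
    using pat_mult[OF _ C B_pat[OF LB] pt] unfolding C1_def L_def by simp
  define b where "b l = (if k < l then - (C1 $$ (q, l) / C1 $$ (q, k)) else 0)" for l
  have bk: "b k = 0" by (simp add: b_def)
  have C1qk: "C1 $$ (q, k) = C $$ (q, k)" using C1k[OF q] by simp
  have bcond: "k < l \<and> k div m = l div m" if l: "l < ?n" and bl: "b l \<noteq> 0" for l
  proof -
    have kl: "k < l" using bl by (simp add: b_def split: if_splits)
    have "C1 $$ (q, l) \<noteq> 0" using bl kl by (simp add: b_def)
    then have "q div m = \<sigma> (l div m)" using C1pat q l unfolding pat_def by blast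
    then have "\<sigma> (l div m) = \<sigma> (k div m)" using qblk by simp
    then have "l div m = k div m" using permutes_inj[OF s] by (meson injD)
    then show ?thesis using kl by simp
  qed
  define R where "R = colop ?n k b"
  define Ri where "Ri = colop ?n k (\<lambda>i. - b i)"
  have RB: "R \<in> B_blocks m d" unfolding R_def by (rule colop_B[where m=m and d=d and q=k and b=b, OF k bk bcond])
  have RiB: "Ri \<in> B_blocks m d" unfolding Ri_def by (rule colop_B[where m=m and d=d and q=k and b="\<lambda>i. - b i", OF k]) (use bk bcond in auto)
  have RRi: "R * Ri = 1\<^sub>m ?n"
    using colop_inv[where q=k and n="?n" and b=b, OF k bk] by (simp add: Ri_def R_def)
  define C2 where "C2 = C1 * R"
  have C2C: "C2 \<in> carrier_mat ?n ?n" unfolding C2_def R_def using C1C colop_carrier by (rule mult_carrier_mat)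
  have C2e: "C2 $$ (i, j) = C1 $$ (i, j) + C1 $$ (i, k) * b j" if "i < ?n" "j < ?n" for i j
    unfolding C2_def R_def using colop_mult[OF C1C k that] .
  have C2pat: "pat m ?n \<sigma> C2"
    using pat_mult[OF C1C _ C1pat B_pat[OF RB]] unfolding C2_def R_def by simp
  have LC: "L \<in> carrier_mat ?n ?n" and RC: "R \<in> carrier_mat ?n ?n" and LiC: "Li \<in> carrier_mat ?n ?n"
    and RiC: "Ri \<in> carrier_mat ?n ?n" using LB RB LiB RiB B_carrier by blast+
  have C2inv: "invertible_mat C2"
  proof -
    have "invertible_mat C1" unfolding C1_def
      using invertible_mult[OF LC C] LB inv by (simp add: B_blocks_def)
    then show ?thesis unfolding C2_def using invertible_mult[OF C1C RC] RB by (simp add: B_blocks_def)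
  qed
  have Ceq: "C = Li * C2 * Ri"
  proof -
    have "Li * C2 * Ri = Li * (L * C * R) * Ri" by (simp add: C2_def C1_def)
    also have "\<dots> = (Li * L) * C * (R * Ri)"
      using LC RC LiC RiC C by (simp add: assoc_mult_mat[of _ ?n ?n _ ?n _ ?n])
    also have "\<dots> = C" using LiL RRi C by simp
    finally show ?thesis by simp
  qed
  have old: "p j < ?n \<and> C $$ (p j, j) \<noteq> 0 \<and> (\<forall>i<?n. i \<noteq> p j \<longrightarrow> C $$ (i, j) = 0)
      \<and> (\<forall>l<?n. l \<noteq> j \<longrightarrow> C $$ (p j, l) = 0)" if "j < k" for j
    using cl that unfolding clean_def by blast
  have pq: "p j \<noteq> q" if j: "j < k" for j
  proof
    assume "p j = q"
    then have "C $$ (q, k) = 0" using old[OF j] k j by auto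
    then show False using Cqk by simp
  qed
  have Cqj: "C $$ (q, j) = 0" if j: "j < k" for j
    using old[OF j] pq[OF j] q by auto
  have colold: "C2 $$ (i, j) = C $$ (i, j)" if i: "i < ?n" and j: "j < k" for i j
  proof -
    have jn: "j < ?n" using j k by simp
    have "b j = 0" using j by (simp add: b_def)
    then show ?thesis using C2e[OF i jn] C1e[OF i jn] Cqj[OF j] by simp
  qed
  have rowold: "C2 $$ (p j, l) = C $$ (p j, l)" if j: "j < k" and l: "l < ?n" for j l
  proof -
    have pj: "p j < ?n" using old[OF j] by blast
    have "C $$ (p j, k) = 0" using old[OF j] k j by auto
    then have "a (p j) = 0" by (simp add: a_def)
    moreover have "C1 $$ (p j, k) = 0" using C1k[OF pj] pq[OF j] by simp
    ultimately show ?thesis using C2e[OF pj l] C1e[OF pj l] by simp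
  qed
  have colk: "C2 $$ (i, k) = (if i = q then C $$ (q, k) else 0)" if i: "i < ?n" for i
    using C2e[OF i k] C1k[OF i] bk by simp
  have rowq: "C2 $$ (q, l) = 0" if l: "l < ?n" "l \<noteq> k" for l
  proof (cases "k < l")
    case True
    then show ?thesis using C2e[OF q l(1)] C1k[OF q] Cqk by (simp add: b_def C1qk)
  next
    case False
    then have lk: "l < k" using l by simp
    then show ?thesis using colold[OF q lk] Cqj[OF lk] by simp
  qed
  define p' where "p' = p(k := q)"
  have "clean ?n (Suc k) p' C2"
    unfolding clean_def
  proof (intro allI impI)
    fix j assume j: "j < Suc k"
    show "p' j < ?n \<and> C2 $$ (p' j, j) \<noteq> 0 \<and> (\<forall>i<?n. i \<noteq> p' j \<longrightarrow> C2 $$ (i, j) = 0)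
      \<and> (\<forall>l<?n. l \<noteq> j \<longrightarrow> C2 $$ (p' j, l) = 0)"
    proof (cases "j = k")
      case True
      then show ?thesis using q colk[OF q] Cqk colk rowq by (simp add: p'_def)
    next
      case False
      then have jk: "j < k" using j by simp
      then have pj: "p' j = p j" by (simp add: p'_def)
      show ?thesis unfolding pj using old[OF jk] colold[OF _ jk] rowold[OF jk] old[OF jk] by simp
    qed
  qed
  then show ?thesis using LiB RiB Ceq C2C C2inv C2pat by blast
qed


lemma elim:
  assumes m: "0 < m" and s: "\<sigma> permutes {..<d}"
    and A: "(A :: 'a::field mat) \<in> carrier_mat (m*d) (m*d)" and inv: "invertible_mat A"
    and pt: "pat m (m*d) \<sigma> A"
  shows "k \<le> m*d \<Longrightarrow> \<exists>b1 b2 C p. b1 \<in> B_blocks m d \<and> b2 \<in> B_blocks m d \<and> A = b1 * C * b2 \<and>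
     C \<in> carrier_mat (m*d) (m*d) \<and> invertible_mat C \<and> pat m (m*d) \<sigma> C \<and> clean (m*d) k p C"
proof (induction k)
  case 0
  have "A = 1\<^sub>m (m*d) * A * 1\<^sub>m (m*d)" using A by simp
  moreover have "clean (m*d) 0 id A" by (simp add: clean_def)
  ultimately show ?case using B_one A inv pt by blast
next
  case (Suc k)
  then obtain b1 b2 C p where b1: "b1 \<in> B_blocks m d" and b2: "b2 \<in> B_blocks m d"
    and AC: "A = b1 * C * b2" and C: "C \<in> carrier_mat (m*d) (m*d)" and iC: "invertible_mat C"
    and pC: "pat m (m*d) \<sigma> C" and cl: "clean (m*d) k p C" by auto
  have k: "k < m*d" using Suc.prems by simp
  obtain b1' b2' C' p' where b1': "b1' \<in> B_blocks m d" and b2': "b2' \<in> B_blocks m d"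
    and CC': "C = b1' * C' * b2'" and C': "C' \<in> carrier_mat (m*d) (m*d)" and rest: "invertible_mat C'"
    "pat m (m*d) \<sigma> C'" "clean (m*d) (Suc k) p' C'"
    using step[OF m s C iC pC cl k] by blast
  note BC = B_carrier[OF b1] B_carrier[OF b2] B_carrier[OF b1'] B_carrier[OF b2']
  have "A = b1 * (b1' * C' * b2') * b2" using AC CC' by simp
  also have "\<dots> = (b1 * b1') * C' * (b2' * b2)"
    using BC C' by (simp add: assoc_mult_mat[of _ "m*d" "m*d" _ "m*d" _ "m*d"])
  finally have "A = (b1 * b1') * C' * (b2' * b2)" .
  then show ?case using B_mult[OF b1 b1'] B_mult[OF b2' b2] C' rest by blast
qed

lemma Xs_sub:
  assumes m: "0 < m" and A: "(A :: 'a::field mat) \<in> Xs m d"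
  shows "\<exists>w \<in> wreath m d. A \<in> double_coset m d w"
proof -
  let ?n = "m*d"
  obtain \<sigma> where s: "\<sigma> permutes {..<d}" and AC: "A \<in> carrier_mat ?n ?n" and iA: "invertible_mat A"
    and pA: "pat m ?n \<sigma> A" using A unfolding Xs_def by blast
  obtain b1 b2 C p where b1: "b1 \<in> B_blocks m d" and b2: "b2 \<in> B_blocks m d" and ABC: "A = b1 * C * b2"
    and C: "C \<in> carrier_mat ?n ?n" and pC: "pat m ?n \<sigma> C" and cl: "clean ?n ?n p C"
    using elim[OF m s AC iA pA, of ?n] by blast
  have cj: "p j < ?n \<and> C $$ (p j, j) \<noteq> 0 \<and> (\<forall>i<?n. i \<noteq> p j \<longrightarrow> C $$ (i, j) = 0)
      \<and> (\<forall>l<?n. l \<noteq> j \<longrightarrow> C $$ (p j, l) = 0)" if "j < ?n" for j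
    using cl that unfolding clean_def by blast
  have pn: "p j < ?n" if "j < ?n" for j using cj[OF that] by blast
  have pblk: "p j div m = \<sigma> (j div m)" if j: "j < ?n" for j
    using pC pn[OF j] j cj[OF j] unfolding pat_def by blast
  have pinj: "p j = p j'" if "j < ?n" "j' < ?n" "p j = p j'" for j j' by (fact that(3))
  have pinj2: "j = j'" if j: "j < ?n" and j': "j' < ?n" and e: "p j = p j'" for j j'
  proof (rule ccontr)
    assume "j \<noteq> j'"
    then have "C $$ (p j, j') = 0" using cj[OF j] j' by blast
    then show False using cj[OF j'] e by simp
  qed
  have blkd: "\<And>i. i < ?n \<Longrightarrow> i div m < d" using m by (simp add: less_mult_imp_div_less mult.commute)
  define ws where "ws i a = (if a < m then p (inv_into UNIV \<sigma> i * m + a) mod m else a)" for i a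
  have wsperm: "ws i permutes {..<m}" if i: "i < d" for i
  proof -
    define J where "J = inv_into UNIV \<sigma> i"
    have J: "J < d" using permutes_in_image[OF permutes_inv[OF s]] i by (simp add: J_def)
    have Jn: "J * m + a < ?n" if "a < m" for a
    proof -
      have "J * m + a < J * m + m" using that by simp
      also have "\<dots> = (J + 1) * m" by simp
      also have "\<dots> \<le> d * m" using J by (intro mult_right_mono) auto
      finally show ?thesis by (simp add: mult.commute)
    qed
    have Jdiv: "(J * m + a) div m = J" if "a < m" for a using that m by simp
    have inj: "inj_on (ws i) {..<m}"
    proof (rule inj_onI)
      fix a a' assume a: "a \<in> {..<m}" and a': "a' \<in> {..<m}" and e: "ws i a = ws i a'"
      have am: "a < m" "a' < m" using a a' by auto
      have emod: "p (J * m + a) mod m = p (J * m + a') mod m" using e am by (simp add: ws_def J_def)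
      have ediv: "p (J * m + a) div m = p (J * m + a') div m"
        using pblk[OF Jn[OF am(1)]] pblk[OF Jn[OF am(2)]] Jdiv am by simp
      have "p (J * m + a) = p (J * m + a')" using emod ediv by (metis div_mult_mod_eq)
      then have "J * m + a = J * m + a'" using pinj2[OF Jn[OF am(1)] Jn[OF am(2)]] by blast
      then show "a = a'" by simp
    qed
    have sub: "ws i ` {..<m} \<subseteq> {..<m}" using m by (auto simp: ws_def)
    have img: "ws i ` {..<m} = {..<m}" using endo_inj_surj[OF _ sub inj] by simp
    have "bij_betw (ws i) {..<m} {..<m}" using inj img by (simp add: bij_betw_def)
    moreover have "\<And>x. x \<notin> {..<m} \<Longrightarrow> ws i x = x" by (simp add: ws_def)
    ultimately show ?thesis using bij_imp_permutes by blast
  qed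
  define w where "w = wreath_perm m d ws \<sigma>"
  have wW: "w \<in> wreath m d" unfolding wreath_def w_def using s wsperm by blast
  have wp: "w j = p j" if j: "j < ?n" for j
  proof -
    have "w j = \<sigma> (j div m) * m + ws (\<sigma> (j div m)) (j mod m)" using j by (simp add: w_def wreath_perm_def)
    also have "ws (\<sigma> (j div m)) (j mod m) = p (j div m * m + j mod m) mod m"
      using m by (simp add: ws_def permutes_inverses(2)[OF s])
    also have "j div m * m + j mod m = j" by simp
    also have "\<sigma> (j div m) = p j div m" using pblk[OF j] by simp
    finally show ?thesis by simp
  qed
  have "monomial_mat ?n w C"
    unfolding monomial_mat_def
  proof (intro conjI allI impI)
    show "C \<in> carrier_mat ?n ?n" by (rule C)
    fix i j assume i: "i < ?n" and j: "j < ?n"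
    show "C $$ (i, j) \<noteq> 0 \<longleftrightarrow> i = w j" using cj[OF j] i wp[OF j] by auto
  qed
  then have "A \<in> double_coset m d w" unfolding double_coset_def using b1 b2 ABC by blast
  then show ?thesis using wW by blast
qed

theorem corollary2p7:
  assumes "m \<ge> 1" and "d \<ge> 1"
  shows "(G_wr m d :: 'a::field mat set) = (\<Union>w \<in> wreath m d. double_coset m d w)
     \<and> (\<forall>w \<in> wreath m d. \<forall>w' \<in> wreath m d. w \<noteq> w' \<longrightarrow>
          double_coset m d w \<inter> (double_coset m d w' :: 'a mat set) = {})"
proof -
  have m: "0 < m" using assms by simp
  have "(G_wr m d :: 'a::field mat set) \<subseteq> (\<Union>w \<in> wreath m d. double_coset m d w)"
  proof
    fix A :: "'a mat" assume "A \<in> G_wr m d"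
    then have "A \<in> Xs m d" using G_sub[OF m] by blast
    then show "A \<in> (\<Union>w \<in> wreath m d. double_coset m d w)" using Xs_sub[OF m] by blast
  qed
  moreover have "(\<Union>w \<in> wreath m d. double_coset m d w) \<subseteq> (G_wr m d :: 'a::field mat set)"
    using union_sub by blast
  moreover have "\<forall>w \<in> wreath m d. \<forall>w' \<in> wreath m d. w \<noteq> w' \<longrightarrow>
          double_coset m d w \<inter> (double_coset m d w' :: 'a mat set) = {}"
    using disj[OF m] by blast
  ultimately show ?thesis by blast
qed

end
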